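(* Let $G$ be a connected chordal graph and let $v\in V(G)$. For any $x,y\in N_G(v)$, the distance between $x$ and $y$ in $G-v$ equals the distance between $x$ and $y$ in the induced subgraph $G[N_G(v)]$.
   Context: Graphs are finite, simple, undirected. A graph is chordal if it has no induced cycle of length at least 4. $N_G(v)$ is the open neighborhood of $v$. Distances are lengths (number of edges) of shortest paths, infinite if no path exists. *)

theory Defs
  imports Main "HOL-Library.Extended_Nat"
begin

definition simple_graph :: "'a set \<Rightarrow> ('a \<Rightarrow> 'a \<Rightarrow> bool) \<Rightarrow> bool" where
  "simple_graph V E \<longleftrightarrow> finite V \<and> (\<forall>x y. E x y \<longrightarrow> x \<in> V \<and> y \<in> V)
     \<and> (\<forall>x y. E x y \<longrightarrow> E y x) \<and> (\<forall>x. \<not> E x x)"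

definition walk_in :: "'a set \<Rightarrow> ('a \<Rightarrow> 'a \<Rightarrow> bool) \<Rightarrow> 'a list \<Rightarrow> bool" where
  "walk_in S E xs \<longleftrightarrow> xs \<noteq> [] \<and> set xs \<subseteq> S
     \<and> (\<forall>i. i + 1 < length xs \<longrightarrow> E (xs ! i) (xs ! (i + 1)))"

text \<open>Distance in the induced subgraph on S (number of edges of a shortest walk);
  infinite if no walk exists.\<close>
definition dist_in :: "'a set \<Rightarrow> ('a \<Rightarrow> 'a \<Rightarrow> bool) \<Rightarrow> 'a \<Rightarrow> 'a \<Rightarrow> enat" where
  "dist_in S E x y =
     (INF xs \<in> {xs. walk_in S E xs \<and> hd xs = x \<and> last xs = y}. enat (length xs - 1))"

definition connected_graph :: "'a set \<Rightarrow> ('a \<Rightarrow> 'a \<Rightarrow> bool) \<Rightarrow> bool" where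
  "connected_graph V E \<longleftrightarrow>
     (\<forall>x\<in>V. \<forall>y\<in>V. \<exists>xs. walk_in V E xs \<and> hd xs = x \<and> last xs = y)"

definition induced_cycle :: "'a set \<Rightarrow> ('a \<Rightarrow> 'a \<Rightarrow> bool) \<Rightarrow> 'a list \<Rightarrow> bool" where
  "induced_cycle V E cs \<longleftrightarrow> length cs \<ge> 3 \<and> distinct cs \<and> set cs \<subseteq> V
     \<and> (\<forall>i < length cs. \<forall>j < length cs.
          E (cs ! i) (cs ! j) \<longleftrightarrow> (j = (i + 1) mod length cs \<or> i = (j + 1) mod length cs))"

definition chordal :: "'a set \<Rightarrow> ('a \<Rightarrow> 'a \<Rightarrow> bool) \<Rightarrow> bool" where
  "chordal V E \<longleftrightarrow> (\<forall>cs. induced_cycle V E cs \<longrightarrow> length cs < 4)"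

definition nbhd :: "('a \<Rightarrow> 'a \<Rightarrow> bool) \<Rightarrow> 'a \<Rightarrow> 'a set" where
  "nbhd E v = {u. E v u}"

end

theory Submission
  imports Defs
begin

lemma shortcut:
  assumes w: "walk_in S E P" and d: "1 \<le> d" and ad: "a + d < length P"
    and c1: "a + d + 1 < length P \<Longrightarrow> E (P!a) (P!(a+d+1))"
    and c2: "a + d + 1 = length P \<Longrightarrow> P!a = P!(a+d)"
  shows "\<exists>Q. walk_in S E Q \<and> hd Q = hd P \<and> last Q = last P \<and> length Q < length P"
proof -
  define Q where "Q = map (\<lambda>i. if i \<le> a then P!i else P!(i+d)) [0..<length P - d]"
  have lQ: "length Q = length P - d" by (simp add: Q_def)
  have nQ: "\<And>i. i < length Q \<Longrightarrow> Q!i = (if i \<le> a then P!i else P!(i+d))"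
    by (simp add: Q_def)
  have ne: "Q \<noteq> []" using ad lQ by auto
  have setQ: "set Q \<subseteq> S"
  proof
    fix z assume "z \<in> set Q"
    then obtain i where i: "i < length Q" "Q!i = z" by (auto simp: in_set_conv_nth)
    have "z = P!(if i \<le> a then i else i+d)" using nQ[OF i(1)] i(2) by auto
    moreover have "(if i \<le> a then i else i+d) < length P" using i(1) lQ by auto
    ultimately have "z \<in> set P" by simp
    then show "z \<in> S" using w unfolding walk_in_def by auto
  qed
  have edges: "\<forall>i. i + 1 < length Q \<longrightarrow> E (Q!i) (Q!(i+1))"
  proof (intro allI impI)
    fix i assume i: "i + 1 < length Q"
    have wE: "\<And>k. k + 1 < length P \<Longrightarrow> E (P!k) (P!(k+1))" using w unfolding walk_in_def by auto
    show "E (Q!i) (Q!(i+1))"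
    proof (cases "i < a")
      case True then show ?thesis using nQ[of i] nQ[of "i+1"] i wE[of i] lQ by auto
    next
      case False
      show ?thesis
      proof (cases "i = a")
        case True
        then show ?thesis using nQ[of i] nQ[of "i+1"] i c1 lQ by auto
      next
        case False
        with \<open>\<not> i < a\<close> have "i > a" by auto
        then show ?thesis using nQ[of i] nQ[of "i+1"] i wE[of "i+d"] lQ by auto
      qed
    qed
  qed
  have hd: "hd Q = hd P"
  proof -
    have "P \<noteq> []" using ad by auto
    then have "hd P = P!0" by (simp add: hd_conv_nth)
    moreover have "hd Q = Q!0" using ne by (simp add: hd_conv_nth)
    moreover have "Q!0 = P!0" using nQ[of 0] ne by auto
    ultimately show ?thesis by simp
  qed
  have last: "last Q = last P"
  proof -
    have "last Q = Q!(length P - d - 1)" using last_conv_nth[OF ne] lQ by simp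
    also have "\<dots> = P!(length P - 1)"
    proof (cases "a + d + 1 = length P")
      case True
      then have "length P - d - 1 = a" "length P - 1 = a + d" by auto
      then show ?thesis using nQ[of "length P - d - 1"] lQ c2 True d by auto
    next
      case False
      then have "\<not> length P - d - 1 \<le> a" "length P - d - 1 + d = length P - 1" using ad d by auto
      then show ?thesis using nQ[of "length P - d - 1"] lQ ad d by auto
    qed
    also have "\<dots> = last P" using ad by (metis last_conv_nth less_nat_zero_code list.size(3))
    finally show ?thesis .
  qed
  show ?thesis
    apply (rule exI[of _ Q])
    using ne setQ edges hd last lQ d ad unfolding walk_in_def by auto
qed

lemma shortest_props:
  assumes w: "walk_in S E P"
    and mn: "\<And>Q. walk_in S E Q \<Longrightarrow> hd Q = hd P \<Longrightarrow> last Q = last P \<Longrightarrow> length P \<le> length Q"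
  shows "distinct P"
    and "\<And>a b. a < length P \<Longrightarrow> b < length P \<Longrightarrow> a < b \<Longrightarrow> E (P!a) (P!b) \<Longrightarrow> b = a + 1"
proof -
  have wE: "\<And>k. k + 1 < length P \<Longrightarrow> E (P!k) (P!(k+1))" using w unfolding walk_in_def by auto
  have no: "\<not> (\<exists>Q. walk_in S E Q \<and> hd Q = hd P \<and> last Q = last P \<and> length Q < length P)"
    using mn by (meson not_le)
  show "distinct P"
  proof (rule ccontr)
    assume "\<not> distinct P"
    then obtain a b where ab: "a < b" "b < length P" "P!a = P!b"
      by (metis distinct_conv_nth linorder_neqE_nat)
    have "\<exists>Q. walk_in S E Q \<and> hd Q = hd P \<and> last Q = last P \<and> length Q < length P"
      apply (rule shortcut[OF w, of "b - a" a])
      using ab wE[of b] by auto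
    with no show False by blast
  qed
  fix a b assume ab: "a < length P" "b < length P" "a < b" "E (P!a) (P!b)"
  show "b = a + 1"
  proof (rule ccontr)
    assume "b \<noteq> a + 1"
    have "\<exists>Q. walk_in S E Q \<and> hd Q = hd P \<and> last Q = last P \<and> length Q < length P"
      apply (rule shortcut[OF w, of "b - a - 1" a])
      using ab \<open>b \<noteq> a + 1\<close> by auto
    with no show False by blast
  qed
qed


lemma mod_helper: "(t::nat) < L \<Longrightarrow> (t + 2) mod (L + 1) = (if t + 2 < L + 1 then t + 2 else 0)"
proof (cases "t + 2 < L + 1")
  case False
  assume "t < L"
  with False have "t + 2 = L + 1" by auto
  then show ?thesis by simp
qed simp

lemma shortest_in_nbhd:
  assumes g: "simple_graph V E" and ch: "chordal V E"
    and w: "walk_in (V - {v}) E P"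
    and mn: "\<And>Q. walk_in (V - {v}) E Q \<Longrightarrow> hd Q = hd P \<Longrightarrow> last Q = last P \<Longrightarrow> length P \<le> length Q"
    and hx: "hd P \<in> nbhd E v" and ly: "last P \<in> nbhd E v"
  shows "set P \<subseteq> nbhd E v"
proof (rule ccontr)
  let ?N = "nbhd E v"
  have sym: "\<And>a b. E a b \<Longrightarrow> E b a" and irr: "\<And>a. \<not> E a a"
    using g unfolding simple_graph_def by auto
  have dP: "distinct P" using shortest_props(1)[OF w mn] by blast
  have indP: "\<And>a b. a < length P \<Longrightarrow> b < length P \<Longrightarrow> a < b \<Longrightarrow> E (P!a) (P!b) \<Longrightarrow> b = a + 1"
    using shortest_props(2)[OF w mn] by blast
  have wE: "\<And>k. k + 1 < length P \<Longrightarrow> E (P!k) (P!(k+1))" using w unfolding walk_in_def by auto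
  have ne: "P \<noteq> []" using w unfolding walk_in_def by auto
  have PV: "set P \<subseteq> V - {v}" using w unfolding walk_in_def by auto
  have adjP: "\<And>a b. a < length P \<Longrightarrow> b < length P \<Longrightarrow> E (P!a) (P!b) \<longleftrightarrow> (b = a + 1 \<or> a = b + 1)"
  proof -
    fix a b assume ab: "a < length P" "b < length P"
    show "E (P!a) (P!b) \<longleftrightarrow> (b = a + 1 \<or> a = b + 1)"
      using indP[OF ab] indP[OF ab(2,1)] wE[of a] wE[of b] sym[of "P!a" "P!b"] sym[of "P!b" "P!a"]
        irr[of "P!a"] ab
      by (cases a b rule: linorder_cases) auto
  qed
  have p0: "P!0 \<in> ?N" using hx ne by (simp add: hd_conv_nth)
  have pl: "P!(length P - 1) \<in> ?N" using ly ne by (simp add: last_conv_nth)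
  assume "\<not> set P \<subseteq> ?N"
  then have ex: "\<exists>k. k < length P \<and> P!k \<notin> ?N" by (auto simp: in_set_conv_nth)
  define k where "k = (LEAST k. k < length P \<and> P!k \<notin> ?N)"
  have k: "k < length P" "P!k \<notin> ?N" using LeastI_ex[OF ex] unfolding k_def by auto
  have bk: "\<And>t. t < k \<Longrightarrow> P!t \<in> ?N"
  proof -
    fix t assume t: "t < k"
    have "\<not> (t < length P \<and> P!t \<notin> ?N)"
      using not_less_Least[of t "\<lambda>k. k < length P \<and> P!k \<notin> ?N"] t unfolding k_def by blast
    then show "P!t \<in> ?N" using t k(1) by auto
  qed
  have k0: "k > 0" using k p0 by (cases k) auto
  have kl: "k < length P - 1"
  proof -
    have "k \<noteq> length P - 1" using k(2) pl by auto
    then show ?thesis using k(1) by auto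
  qed
  have exj: "\<exists>j. k < j \<and> j < length P \<and> P!j \<in> ?N" using kl pl by (intro exI[of _ "length P - 1"]) auto
  define j where "j = (LEAST j. k < j \<and> j < length P \<and> P!j \<in> ?N)"
  have j: "k < j" "j < length P" "P!j \<in> ?N" using LeastI_ex[OF exj] unfolding j_def by auto
  have bj: "\<And>t. k < t \<Longrightarrow> t < j \<Longrightarrow> P!t \<notin> ?N"
  proof -
    fix t assume t: "k < t" "t < j"
    have "\<not> (k < t \<and> t < length P \<and> P!t \<in> ?N)"
      using not_less_Least[of t "\<lambda>j. k < j \<and> j < length P \<and> P!j \<in> ?N"] t(2) unfolding j_def by blast
    then show "P!t \<notin> ?N" using t j(2) by auto
  qed
  define i where "i = k - 1"
  define L where "L = j - i + 1"
  have L3: "L \<ge> 3" using j(1) k0 unfolding L_def i_def by linarith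
  have iL: "i + L = j + 1" using j(1) k0 unfolding L_def i_def by linarith
  define q where "q = take L (drop i P)"
  have lq: "length q = L" using iL j(2) unfolding q_def by auto
  have nq: "\<And>t. t < L \<Longrightarrow> q!t = P!(i+t)" using iL j(2) unfolding q_def by auto
  have memN: "\<And>t. t < L \<Longrightarrow> P!(i+t) \<in> ?N \<longleftrightarrow> (t = 0 \<or> t = L - 1)"
  proof -
    fix t assume t: "t < L"
    show "P!(i+t) \<in> ?N \<longleftrightarrow> (t = 0 \<or> t = L - 1)"
    proof (cases "t = 0")
      case True then show ?thesis using bk[of i] k0 unfolding i_def by auto
    next
      case False
      show ?thesis
      proof (cases "t = L - 1")
        case True
        then have "i + t = j" using iL L3 by auto
        then show ?thesis using j(3) True by auto
      next
        case f2: False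
        show ?thesis
        proof (cases "i + t = k")
          case True then show ?thesis using k(2) False f2 by auto
        next
          case f3: False
          have "k < i + t" "i + t < j" using False f2 f3 t iL k0 unfolding i_def by auto
          then show ?thesis using bj False f2 by auto
        qed
      qed
    qed
  qed
  define cs where "cs = v # q"
  have lcs: "length cs = L + 1" using lq cs_def by auto
  have "induced_cycle V E cs"
    unfolding induced_cycle_def
  proof (intro conjI allI impI)
    show "3 \<le> length cs" using lcs L3 by auto
    show "distinct cs" unfolding cs_def q_def using dP PV
      by (auto dest: in_set_takeD in_set_dropD)
    have vV: "v \<in> V" using p0 g unfolding simple_graph_def nbhd_def by auto
    have "set q \<subseteq> set P" unfolding q_def by (meson set_drop_subset set_take_subset subset_trans)
    then show "set cs \<subseteq> V" unfolding cs_def using PV vV by auto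
  next
    fix a b assume a: "a < length cs" and b: "b < length cs"
    show "E (cs!a) (cs!b) \<longleftrightarrow> (b = (a + 1) mod length cs \<or> a = (b + 1) mod length cs)"
    proof (cases a)
      case 0
      show ?thesis
      proof (cases b)
        case 0 then show ?thesis using \<open>a = 0\<close> irr lcs L3 by auto
      next
        case (Suc t)
        have t: "t < L" using b Suc lcs by auto
        have "E (cs!a) (cs!b) \<longleftrightarrow> P!(i+t) \<in> ?N" using 0 Suc nq[OF t] cs_def by (simp add: nbhd_def)
        also have "\<dots> \<longleftrightarrow> (t = 0 \<or> t = L - 1)" using memN[OF t] .
        also have "\<dots> \<longleftrightarrow> (b = (a + 1) mod length cs \<or> a = (b + 1) mod length cs)"
        proof -
          have e2: "(b + 1) mod length cs = (if t + 2 < L + 1 then t + 2 else 0)"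
            using Suc lcs t mod_helper[OF t] by simp
          show ?thesis unfolding e2 using 0 Suc lcs L3 t by auto
        qed
        finally show ?thesis .
      qed
    next
      case (Suc s)
      have s: "s < L" using a Suc lcs by auto
      show ?thesis
      proof (cases b)
        case 0
        have "E (cs!a) (cs!b) \<longleftrightarrow> P!(i+s) \<in> ?N" using 0 Suc nq[OF s] cs_def sym
          by (auto simp: nbhd_def)
        also have "\<dots> \<longleftrightarrow> (s = 0 \<or> s = L - 1)" using memN[OF s] .
        also have "\<dots> \<longleftrightarrow> (b = (a + 1) mod length cs \<or> a = (b + 1) mod length cs)"
        proof -
          have e1: "(a + 1) mod length cs = (if s + 2 < L + 1 then s + 2 else 0)"
            using \<open>a = Suc s\<close> lcs s mod_helper[OF s] by simp
          show ?thesis unfolding e1 using 0 \<open>a = Suc s\<close> lcs L3 s by auto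
        qed
        finally show ?thesis .
      next
        case (Suc t)
        have t: "t < L" using b Suc lcs by auto
        have "E (cs!a) (cs!b) \<longleftrightarrow> E (P!(i+s)) (P!(i+t))"
          using \<open>a = Suc s\<close> Suc nq[OF s] nq[OF t] cs_def by simp
        also have "\<dots> \<longleftrightarrow> (i+t = i+s+1 \<or> i+s = i+t+1)"
          using adjP[of "i+s" "i+t"] s t iL j(2) by auto
        also have "\<dots> \<longleftrightarrow> (b = (a + 1) mod length cs \<or> a = (b + 1) mod length cs)"
        proof -
          have e1: "(a + 1) mod length cs = (if s + 2 < L + 1 then s + 2 else 0)"
            using \<open>a = Suc s\<close> lcs s mod_helper[OF s] by simp
          have e2: "(b + 1) mod length cs = (if t + 2 < L + 1 then t + 2 else 0)"
            using Suc lcs t mod_helper[OF t] by simp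
          show ?thesis unfolding e1 e2 using \<open>a = Suc s\<close> Suc s t by auto
        qed
        finally show ?thesis .
      qed
    qed
  qed
  then have "length cs < 4" using ch unfolding chordal_def by blast
  then show False using lcs L3 by auto
qed


theorem lemma5:
  fixes V :: "'a set" and E :: "'a \<Rightarrow> 'a \<Rightarrow> bool" and v x y :: 'a
  assumes "simple_graph V E" and "connected_graph V E" and "chordal V E"
    and "v \<in> V" and "x \<in> nbhd E v" and "y \<in> nbhd E v"
  shows "dist_in (V - {v}) E x y = dist_in (nbhd E v) E x y"
proof -
  let ?N = "nbhd E v"
  let ?W = "\<lambda>S. {xs. walk_in S E xs \<and> hd xs = x \<and> last xs = y}"
  have NV: "?N \<subseteq> V - {v}" using assms(1) unfolding simple_graph_def nbhd_def by auto
  have sub: "?W ?N \<subseteq> ?W (V - {v})" using NV unfolding walk_in_def by auto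
  have le1: "dist_in (V - {v}) E x y \<le> dist_in ?N E x y"
    unfolding dist_in_def by (rule INF_superset_mono[OF sub]) simp
  have key: "\<exists>n\<in>?W ?N. enat (length n - 1) \<le> enat (length m - 1)" if m: "m \<in> ?W (V - {v})" for m
  proof -
    have exl: "\<exists>l. \<exists>P\<in>?W (V - {v}). length P = l" using m by blast
    define l where "l = (LEAST l. \<exists>P\<in>?W (V - {v}). length P = l)"
    obtain P where P: "P \<in> ?W (V - {v})" "length P = l"
      using LeastI_ex[OF exl] unfolding l_def by blast
    have minl: "\<And>Q. Q \<in> ?W (V - {v}) \<Longrightarrow> l \<le> length Q"
      unfolding l_def by (rule Least_le) blast
    have w: "walk_in (V - {v}) E P" using P by auto
    have mn: "\<And>Q. walk_in (V - {v}) E Q \<Longrightarrow> hd Q = hd P \<Longrightarrow> last Q = last P \<Longrightarrow> length P \<le> length Q"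
      using minl P by auto
    have "set P \<subseteq> ?N"
      by (rule shortest_in_nbhd[OF assms(1) assms(3) w mn]) (use P assms(5,6) in auto)
    then have "P \<in> ?W ?N" using P unfolding walk_in_def by auto
    moreover have "length P \<le> length m" using minl[OF m] P by auto
    ultimately show ?thesis by (intro bexI[of _ P]) auto
  qed
  have le2: "dist_in ?N E x y \<le> dist_in (V - {v}) E x y"
    unfolding dist_in_def by (rule INF_mono) (rule key)
  show ?thesis using le1 le2 by simp
qed

end
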